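(* Let $n \ge 2$ be even. Then $|S_{1,1}(n)| - |S_{0,0}(n)|$ equals the number of irreducible polynomials of degree $n/2$ in $\mathbb{F}_2[x]$ whose coefficient of $x^{n/2-1}$ is $1$. Moreover, \[ |S_{1,1}(n)| - |S_{0,0}(n)| = \frac{1}{n}\sum_{\substack{d \mid n/2 \\ d \text{ odd}}} \mu(d)\, 2^{n/(2d)}, \] where $\mu$ is the Möbius function.
   Context: For $n \ge 2$, let $\mathcal{I}_n$ be the set of all irreducible polynomials of degree $n$ in $\mathbb{F}_2[x]$. Every $f \in \mathcal{I}_n$ is monic with constant term $1$; write $f = x^n + f_{n-1}x^{n-1} + \cdots + f_1 x + 1$ with $f_k \in \mathbb{F}_2$. The coefficient $f_{n-1}$ is the trace of $f$ and $f_1$ is its cotrace. For $i,j \in \mathbb{F}_2$, $S_{i,j}(n)$ denotes the set of $f \in \mathcal{I}_n$ with $f_{n-1} = i$ and $f_1 = j$. The trace of a monic irreducible polynomial of degree $m$ is its coefficient of $x^{m-1}$; for $m=1$ the trace-$1$ irreducible is $x+1$. The Möbius function is $\mu(1)=1$, $\mu(m)=(-1)^k$ if $m$ is a product of $k$ distinct primes, and $\mu(m)=0$ otherwise. *)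

theory Defs
  imports "HOL-Computational_Algebra.Computational_Algebra" "HOL-Library.Z2"
begin

definition irred_F2 :: "nat \<Rightarrow> bit poly set" where
  "irred_F2 n = {f. lead_coeff f = 1 \<and> irreducible f \<and> degree f = n}"

text \<open>S i j n: irreducibles of degree n with trace (coeff of x^(n-1)) i and cotrace (coeff of x) j.\<close>
definition S :: "bit \<Rightarrow> bit \<Rightarrow> nat \<Rightarrow> bit poly set" where
  "S i j n = {f \<in> irred_F2 n. coeff f (n - 1) = i \<and> coeff f 1 = j}"

definition mobius :: "nat \<Rightarrow> int" where
  "mobius m = (if squarefree m then (-1) ^ card (prime_factors m) else 0)"

end

theory Submission
  imports Defs "HOL-Computational_Algebra.Field_as_Ring"
begin


instantiation bit ::
  "{unique_euclidean_ring, normalization_euclidean_semiring, normalization_semidom_multiplicative}"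
begin
definition [simp]: "normalize_bit = (normalize_field :: bit \<Rightarrow> _)"
definition [simp]: "unit_factor_bit = (unit_factor_field :: bit \<Rightarrow> _)"
definition [simp]: "euclidean_size_bit = (euclidean_size_field :: bit \<Rightarrow> _)"
definition [simp]: "division_segment (x :: bit) = 1"
instance
  by standard
    (simp_all add: dvd_field_iff field_split_simps split: if_splits)
end

instantiation bit :: euclidean_ring_gcd
begin
definition gcd_bit :: "bit \<Rightarrow> bit \<Rightarrow> bit" where
  "gcd_bit = Euclidean_Algorithm.gcd"
definition lcm_bit :: "bit \<Rightarrow> bit \<Rightarrow> bit" where
  "lcm_bit = Euclidean_Algorithm.lcm"
definition Gcd_bit :: "bit set \<Rightarrow> bit" where
 "Gcd_bit = Euclidean_Algorithm.Gcd"
definition Lcm_bit :: "bit set \<Rightarrow> bit" where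
 "Lcm_bit = Euclidean_Algorithm.Lcm"
instance by standard (simp_all add: gcd_bit_def lcm_bit_def Gcd_bit_def Lcm_bit_def)
end

instance bit :: field_gcd ..



lemma mobius_1[simp]: "mobius 1 = 1"
  by (simp add: mobius_def)

lemma mobius_mult_prime:
  assumes p: "prime (p::nat)" and nd: "\<not> p dvd s" and s: "s > 0"
  shows "mobius (p*s) = - mobius s"
proof -
  have cop: "coprime p s" using p nd by (simp add: prime_imp_coprime)
  have sq: "squarefree (p*s) \<longleftrightarrow> squarefree s"
    using squarefree_multD(2)[of p s] squarefree_mult_coprime[OF cop] p
    by (auto simp: squarefree_prime)
  have pf: "prime_factors (p*s) = insert p (prime_factors s)"
    using prime_factors_product[of p s] p s by (auto simp: prime_prime_factors)
  have pn: "p \<notin> prime_factors s" using nd by auto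
  have fin: "finite (prime_factors s)" by simp
  show ?thesis unfolding mobius_def using sq pf pn fin by simp
qed

lemma mobius_mult_prime2:
  assumes p: "prime (p::nat)" and d: "p dvd s"
  shows "mobius (p*s) = 0"
proof -
  have "p^2 dvd p*s" using d by (simp add: power2_eq_square)
  hence "\<not> squarefree (p*s)" using p
    by (metis not_prime_unit squarefreeD)
  thus ?thesis by (simp add: mobius_def)
qed



lemma mobius_sum:
  assumes j: "(j::nat) > 1"
  shows "(\<Sum>e\<in>{e. e dvd j}. mobius e) = 0"
proof -
  obtain p where p: "prime p" "p dvd j" using j prime_factor_nat[of j] by auto
  define q where "q = j div p"
  have jq: "j = p * q" using p by (simp add: q_def)
  have q0: "q > 0" using j jq by (cases "q = 0") auto
  have finq: "finite {e. e dvd q}" using q0 by (simp add: finite_divisors_nat)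
  have finj: "finite {e. e dvd j}" using j by (simp add: finite_divisors_nat)
  have A: "{e. e dvd j \<and> \<not> p dvd e} = {e. e dvd q \<and> \<not> p dvd e}"
  proof (auto simp: jq)
    fix e assume "e dvd p * q" "\<not> p dvd e"
    hence "coprime e p" using p(1) by (metis coprime_commute prime_imp_coprime)
    thus "e dvd q" using \<open>e dvd p * q\<close> coprime_dvd_mult_right_iff by blast
  qed
  have B: "{e. e dvd j \<and> p dvd e} = (\<lambda>e. p*e) ` {e. e dvd q}"
  proof (intro set_eqI iffI)
    fix x assume "x \<in> {e. e dvd j \<and> p dvd e}"
    then obtain k where k: "x = p*k" "p*k dvd p*q" proof -
      from \<open>x \<in> _\<close> have "x dvd j" "p dvd x" by auto
      then obtain k where "x = p*k" by (auto elim: dvdE)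
      with \<open>x dvd j\<close> show ?thesis using that jq by blast
    qed
    hence "k dvd q" using p(1) by (simp add: prime_gt_0_nat)
    thus "x \<in> (\<lambda>e. p*e) ` {e. e dvd q}" using k by auto
  next
    fix x assume "x \<in> (\<lambda>e. p*e) ` {e. e dvd q}"
    then obtain k where "x = p*k" "k dvd q" by blast
    thus "x \<in> {e. e dvd j \<and> p dvd e}" unfolding jq by simp
  qed
  have inj: "inj_on (\<lambda>e. p*e) {e. e dvd q}" using p(1) by (auto simp: inj_on_def prime_gt_0_nat)
  have "(\<Sum>e\<in>{e. e dvd j}. mobius e) = (\<Sum>e\<in>{e. e dvd j \<and> \<not> p dvd e}. mobius e) + (\<Sum>e\<in>{e. e dvd j \<and> p dvd e}. mobius e)"
  proof -
    have U: "{e. e dvd j} = {e. e dvd j \<and> \<not> p dvd e} \<union> {e. e dvd j \<and> p dvd e}" by blast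
    show ?thesis unfolding U
      by (rule sum.union_disjoint) (auto intro: finite_subset[OF _ finj])
  qed
  also have "(\<Sum>e\<in>{e. e dvd j \<and> p dvd e}. mobius e) = (\<Sum>e\<in>{e. e dvd q}. mobius (p*e))"
    unfolding B by (simp add: sum.reindex[OF inj])
  also have "\<dots> = (\<Sum>e\<in>{e. e dvd q}. if \<not> p dvd e then - mobius e else 0)"
  proof (rule sum.cong[OF refl])
    fix e assume "e \<in> {e. e dvd q}"
    hence "e > 0" using q0 by (auto intro: Nat.gr0I)
    thus "mobius (p*e) = (if \<not> p dvd e then - mobius e else 0)"
      using mobius_mult_prime[OF p(1)] mobius_mult_prime2[OF p(1)] by auto
  qed
  also have "\<dots> = - (\<Sum>e\<in>{e. e dvd q \<and> \<not> p dvd e}. mobius e)"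
  proof -
    have e: "{e. e dvd q \<and> \<not> p dvd e} = {e\<in>{e. e dvd q}. \<not> p dvd e}" by simp
    show ?thesis unfolding e sum.inter_filter[OF finq] sum_negf[symmetric] by (intro sum.cong refl) simp
  qed
  finally show ?thesis unfolding A by simp
qed



lemma odd_div_arith:
  assumes k: "(k::nat) > 0"
  shows "(e dvd k \<and> odd e \<and> d dvd (k div e) \<and> odd (k div e div d)) \<longleftrightarrow>
         (d dvd k \<and> odd (k div d) \<and> e dvd (k div d))"
proof
  assume h: "e dvd k \<and> odd e \<and> d dvd (k div e) \<and> odd (k div e div d)"
  then obtain a where a: "k = e*a" by (auto elim: dvdE)
  have e0: "e > 0" using h by (cases e) auto
  have ka: "k div e = a" using a e0 by simp
  then obtain b where b: "a = d*b" using h by (auto elim: dvdE)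
  have d0: "d > 0" using k a b by (cases d) auto
  have "k div e div d = b" using ka b d0 by simp
  hence bo: "odd b" using h by simp
  have kd: "k div d = e*b" using a b d0 by simp
  show "d dvd k \<and> odd (k div d) \<and> e dvd (k div d)"
    using kd bo h a b by auto
next
  assume h: "d dvd k \<and> odd (k div d) \<and> e dvd (k div d)"
  then obtain c where c: "k = d*c" by (auto elim: dvdE)
  have d0: "d > 0" using k c by (cases d) auto
  have kc: "k div d = c" using c d0 by simp
  then obtain b where b: "c = e*b" using h by (auto elim: dvdE)
  have e0: "e > 0" using k c b by (cases e) auto
  have eo: "odd e" using h kc b by auto
  have bo: "odd b" using h kc b by auto
  have ke: "k div e = d*b" using c b e0 by simp
  have "k div e div d = b" using ke d0 by simp
  thus "e dvd k \<and> odd e \<and> d dvd (k div e) \<and> odd (k div e div d)"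
    using ke eo bo c b by auto
qed

lemma div_dvd_self_nat: "(e::nat) dvd k \<Longrightarrow> (k div e) dvd k"
  by (metis dvd_mult_div_cancel dvd_triv_right)

lemma odd_inversion:
  fixes f g :: "nat \<Rightarrow> int"
  assumes H: "\<And>k. k > 0 \<Longrightarrow> (\<Sum>d\<in>{d. d dvd k \<and> odd (k div d)}. f d) = g k"
    and k: "k > 0"
  shows "f k = (\<Sum>e\<in>{e. e dvd k \<and> odd e}. mobius e * g (k div e))"
proof -
  define R where "R e d = (e dvd k \<and> odd e \<and> d dvd (k div e) \<and> odd (k div e div d))" for e d
  have sub: "\<And>x. x dvd k \<Longrightarrow> x \<in> {1..k}" using k
    by (auto intro: dvd_imp_le)
  have "(\<Sum>e\<in>{e. e dvd k \<and> odd e}. mobius e * g (k div e))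
      = (\<Sum>e\<in>{1..k}. \<Sum>d\<in>{d\<in>{1..k}. R e d}. mobius e * f d)"
  proof -
    have "(\<Sum>e\<in>{e. e dvd k \<and> odd e}. mobius e * g (k div e))
        = (\<Sum>e\<in>{1..k}. if e dvd k \<and> odd e then mobius e * g (k div e) else 0)"
      using sub by (subst sum.inter_filter[symmetric]) (auto intro!: sum.cong)
    also have "\<dots> = (\<Sum>e\<in>{1..k}. \<Sum>d\<in>{d\<in>{1..k}. R e d}. mobius e * f d)"
    proof (rule sum.cong[OF refl])
      fix e assume e: "e \<in> {1..k}"
      show "(if e dvd k \<and> odd e then mobius e * g (k div e) else 0) = (\<Sum>d\<in>{d\<in>{1..k}. R e d}. mobius e * f d)"
      proof (cases "e dvd k \<and> odd e")
        case True
        have kp: "k div e > 0" using True k by (auto elim!: dvdE)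
        have "{d\<in>{1..k}. R e d} = {d. d dvd (k div e) \<and> odd (k div e div d)}"
          using True sub unfolding R_def by (auto intro: dvd_trans[OF _ div_dvd_self_nat])
        then show ?thesis using True H[OF kp] by (simp add: sum_distrib_left[symmetric])
      next
        case False
        hence em: "{d\<in>{1..k}. R e d} = {}" unfolding R_def by auto
        show ?thesis using False em by (metis sum.empty)
      qed
    qed
    finally show ?thesis .
  qed
  also have "\<dots> = (\<Sum>d\<in>{1..k}. \<Sum>e\<in>{e\<in>{1..k}. R e d}. mobius e * f d)"
    by (rule sum.swap_restrict) auto
  also have "\<dots> = (\<Sum>d\<in>{1..k}. if d = k then f k else 0)"
  proof (rule sum.cong[OF refl])
    fix d assume d: "d \<in> {1..k}"
    show "(\<Sum>e\<in>{e\<in>{1..k}. R e d}. mobius e * f d) = (if d = k then f k else 0)"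
    proof (cases "d dvd k \<and> odd (k div d)")
      case True
      have kp: "k div d > 0" using True k by (auto elim!: dvdE)
      have "{e\<in>{1..k}. R e d} = {e. e dvd (k div d)}"
        unfolding R_def odd_div_arith[OF k] using True sub
        by (auto intro: dvd_trans[OF _ div_dvd_self_nat])
      hence "(\<Sum>e\<in>{e\<in>{1..k}. R e d}. mobius e * f d) = (\<Sum>e\<in>{e. e dvd (k div d)}. mobius e) * f d"
        by (simp add: sum_distrib_right)
      also have "\<dots> = (if d = k then f k else 0)"
      proof (cases "k div d = 1")
        case True
        hence "d = k" using \<open>d dvd k \<and> odd (k div d)\<close> k by (metis div_self dvd_mult_div_cancel nat_mult_1_right)
        thus ?thesis using True mobius_1 by (simp del: One_nat_def)
      next
        case False
        hence "k div d > 1" using kp by simp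
        moreover have "d \<noteq> k" using False k by auto
        ultimately show ?thesis using mobius_sum by simp
      qed
      finally show ?thesis .
    next
      case False
      hence em: "{e\<in>{1..k}. R e d} = {}" unfolding R_def odd_div_arith[OF k] by auto
      moreover have "d \<noteq> k" using False k by auto
      ultimately show ?thesis by (metis sum.empty)
    qed
  qed
  also have "\<dots> = f k" using k by simp
  finally show ?thesis ..
qed



lemma UNIV_bit: "(UNIV :: bit set) = {0, 1}"
  using bit_not_zero_iff by auto

definition Mon :: "nat \<Rightarrow> bit poly set" where
  "Mon n = {f. lead_coeff f = 1 \<and> degree f = n}"

lemma Mon_0: "Mon 0 = {1}"
proof (intro set_eqI iffI)
  fix f assume "f \<in> Mon 0"
  hence "lead_coeff f = 1" "degree f = 0" by (auto simp: Mon_def)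
  thus "f \<in> {1}" by (metis degree_0_id one_pCons singletonI)
qed (auto simp: Mon_def)

lemma Mon_Suc: "Mon (Suc n) = (\<lambda>(c,g). pCons c g) ` (UNIV \<times> Mon n)"
proof (intro set_eqI iffI)
  fix f assume f: "f \<in> Mon (Suc n)"
  obtain c g where fg: "f = pCons c g" by (cases f rule: pCons_cases)
  have "g \<noteq> 0" using f fg by (auto simp: Mon_def)
  hence "g \<in> Mon n" using f fg by (auto simp: Mon_def)
  thus "f \<in> (\<lambda>(c,g). pCons c g) ` (UNIV \<times> Mon n)" using fg by auto
next
  fix f assume "f \<in> (\<lambda>(c,g). pCons c g) ` (UNIV \<times> Mon n)"
  then obtain c g where fg: "f = pCons c g" "g \<in> Mon n" by auto
  hence "g \<noteq> 0" by (auto simp: Mon_def)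
  thus "f \<in> Mon (Suc n)" using fg by (auto simp: Mon_def)
qed

lemma finite_card_Mon: "finite (Mon n) \<and> card (Mon n) = 2^n"
proof (induction n)
  case 0 thus ?case by (simp add: Mon_0)
next
  case (Suc n)
  have inj: "inj_on (\<lambda>(c,g). pCons c g) (UNIV \<times> Mon n)" by (auto simp: inj_on_def)
  have "finite (UNIV :: bit set)" by (simp add: UNIV_bit)
  hence fin: "finite ((UNIV::bit set) \<times> Mon n)" using Suc by (intro finite_cartesian_product) auto
  show ?case unfolding Mon_Suc using fin card_image[OF inj] Suc
    by (simp add: card_cartesian_product UNIV_bit)
qed

lemma finite_Mon[simp]: "finite (Mon n)" and card_Mon: "card (Mon n) = 2^n"
  using finite_card_Mon by auto

definition Prm :: "nat \<Rightarrow> bit poly set" where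
  "Prm n = {P. lead_coeff P = 1 \<and> irreducible P \<and> degree P \<le> n}"

lemma Prm_sub: "Prm n \<subseteq> (\<Union>d\<in>{..n}. Mon d)"
  by (auto simp: Prm_def Mon_def)

lemma finite_Prm[simp]: "finite (Prm n)"
  by (rule finite_subset[OF Prm_sub]) auto

lemma lead_bit: "(P::bit poly) \<noteq> 0 \<Longrightarrow> lead_coeff P = 1"
  using leading_coeff_neq_0 bit_not_zero_iff by metis

lemma normalize_bit_poly[simp]: "normalize (P::bit poly) = P"
proof (cases "P = 0")
  case False
  have one: "[:1:] = (1::bit poly)" by simp
  show ?thesis by (subst normalize_poly_def) (simp only: lead_bit[OF False] unit_factor_bit_def unit_factor_field_def one div_by_1)
qed simp

lemma monic_prime_iff: "prime (P::bit poly) \<longleftrightarrow> lead_coeff P = 1 \<and> irreducible P"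
  unfolding prime_def prime_elem_iff_irreducible by (auto simp: lead_bit irreducible_def)

lemma irr_degree_pos: "irreducible (P::bit poly) \<Longrightarrow> degree P > 0"
  by (metis gr0I irreducible_def is_unit_iff_degree)

lemma degree_factor:
  assumes f: "f \<in> Mon n"
  shows "n = (\<Sum>P\<in>Prm n. \<Sum>k\<in>{1..n}. if P^k dvd f then degree P else 0)"
proof -
  have f0: "f \<noteq> 0" and nf: "normalize f = f" and df: "degree f = n" using f by (auto simp: Mon_def)
  have "n = degree (\<Prod>p\<in>prime_factors f. p ^ multiplicity p f)"
    using prod_prime_factors[OF f0] nf df by simp
  also have "\<dots> = (\<Sum>p\<in>prime_factors f. multiplicity p f * degree p)"
    by (subst degree_prod_sum_eq) (auto intro!: sum.cong simp: degree_power_eq dest: in_prime_factors_imp_prime)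
  also have "\<dots> = (\<Sum>P\<in>Prm n. multiplicity P f * degree P)"
  proof (rule sum.mono_neutral_left)
    show "prime_factors f \<subseteq> Prm n"
    proof
      fix p assume p: "p \<in> prime_factors f"
      hence "prime p" "p dvd f" by auto
      hence "degree p \<le> degree f" using f0 by (simp add: dvd_imp_degree_le)
      thus "p \<in> Prm n" using \<open>prime p\<close> df by (auto simp: Prm_def monic_prime_iff)
    qed
    show "\<forall>i\<in>Prm n - prime_factors f. multiplicity i f * degree i = 0"
      using f0 by (auto simp: Prm_def monic_prime_iff in_prime_factors_iff intro!: not_dvd_imp_multiplicity_0)
  qed auto
  also have "\<dots> = (\<Sum>P\<in>Prm n. \<Sum>k\<in>{1..n}. if P^k dvd f then degree P else 0)"
  proof (rule sum.cong[OF refl])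
    fix P assume P: "P \<in> Prm n"
    hence nu: "\<not> is_unit P" and dP: "degree P > 0" using irr_degree_pos by (auto simp: Prm_def irreducible_def)
    have "P ^ multiplicity P f dvd f" by (rule multiplicity_dvd)
    hence "degree (P ^ multiplicity P f) \<le> degree f" using f0 by (rule dvd_imp_degree_le)
    moreover have "P \<noteq> 0" using dP by auto
    ultimately have "multiplicity P f * degree P \<le> n" using df by (simp add: degree_power_eq)
    moreover have "multiplicity P f \<le> multiplicity P f * degree P" using dP by simp
    ultimately have mn: "multiplicity P f \<le> n" by linarith
    have st: "{k\<in>{1..n}. P^k dvd f} = {1..multiplicity P f}"
    proof (intro set_eqI)
      fix k
      have "P^k dvd f \<longleftrightarrow> k \<le> multiplicity P f" by (rule power_dvd_iff_le_multiplicity[OF f0 nu])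
      thus "k \<in> {k\<in>{1..n}. P^k dvd f} \<longleftrightarrow> k \<in> {1..multiplicity P f}" using mn by auto
    qed
    have "(\<Sum>k\<in>{1..n}. if P^k dvd f then degree P else 0) = (\<Sum>k\<in>{k\<in>{1..n}. P^k dvd f}. degree P)"
      by (rule sum.inter_filter[symmetric]) simp
    also have "\<dots> = multiplicity P f * degree P" unfolding st by simp
    finally have "(\<Sum>k\<in>{1..n}. if P^k dvd f then degree P else 0) = multiplicity P f * degree P" .
    thus "multiplicity P f * degree P = (\<Sum>k\<in>{1..n}. if P^k dvd f then degree P else 0)" ..
  qed
  finally show ?thesis .
qed



definition A :: "(bit poly \<Rightarrow> int) \<Rightarrow> nat \<Rightarrow> int" where
  "A \<chi> n = (\<Sum>f\<in>Mon n. \<chi> f)"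

definition Bd :: "(bit poly \<Rightarrow> int) \<Rightarrow> nat \<Rightarrow> int" where
  "Bd \<chi> m = (\<Sum>d\<in>{d. d dvd m}. \<Sum>P\<in>irred_F2 d. int d * \<chi> P ^ (m div d))"

lemma irred_sub_Prm: "d \<le> N \<Longrightarrow> irred_F2 d \<subseteq> Prm N"
  by (auto simp: irred_F2_def Prm_def)

lemma finite_irred[simp]: "finite (irred_F2 d)"
  by (rule finite_subset[OF irred_sub_Prm[of d d]]) auto

lemma dvd_set:
  assumes P: "lead_coeff P = 1"
  shows "{f\<in>Mon n. P^k dvd f} = (if k * degree P \<le> n then (\<lambda>g. P^k*g) ` Mon (n - k * degree P) else {})"
proof -
  have P0: "P \<noteq> 0" using P by auto
  have lP: "lead_coeff (P^k) = 1" using P by (simp add: lead_coeff_power)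
  have dP: "degree (P^k) = k * degree P" by (simp add: degree_power_eq P0)
  have Pk0: "P^k \<noteq> 0" using P0 by simp
  show ?thesis
  proof (cases "k * degree P \<le> n")
    case True
    have "{f\<in>Mon n. P^k dvd f} = (\<lambda>g. P^k*g) ` Mon (n - k * degree P)"
    proof (intro set_eqI iffI)
      fix f assume "f \<in> {f\<in>Mon n. P^k dvd f}"
      then obtain g where f: "f \<in> Mon n" "f = P^k * g" by (auto elim: dvdE)
      have g0: "g \<noteq> 0" using f by (auto simp: Mon_def)
      have "lead_coeff g = 1" using g0 by (rule lead_bit)
      moreover have "degree g = n - k * degree P"
      proof -
        have "degree f = k*degree P + degree g" using f g0 Pk0 dP by (simp add: degree_mult_eq)
        moreover have "degree f = n" using f by (simp add: Mon_def)
        ultimately show ?thesis by linarith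
      qed
      ultimately show "f \<in> (\<lambda>g. P^k*g) ` Mon (n - k * degree P)" using f by (auto simp: Mon_def)
    next
      fix f assume "f \<in> (\<lambda>g. P^k*g) ` Mon (n - k * degree P)"
      then obtain g where g: "g \<in> Mon (n - k * degree P)" "f = P^k * g" by auto
      have g0: "g \<noteq> 0" using g by (auto simp: Mon_def)
      have "degree f = n" using g g0 Pk0 dP True by (simp add: Mon_def degree_mult_eq)
      moreover have "lead_coeff f = 1" using g lP by (auto simp: Mon_def lead_coeff_mult)
      ultimately show "f \<in> {f\<in>Mon n. P^k dvd f}" using g by (auto simp: Mon_def)
    qed
    thus ?thesis using True by simp
  next
    case False
    have "{f\<in>Mon n. P^k dvd f} = {}"
    proof (auto)
      fix f assume f: "f \<in> Mon n" "P^k dvd f"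
      hence "f \<noteq> 0" by (auto simp: Mon_def)
      hence "degree (P^k) \<le> degree f" using f by (simp add: dvd_imp_degree_le)
      thus False using f False dP by (auto simp: Mon_def)
    qed
    thus ?thesis using False by simp
  qed
qed

lemma degree_factor_int:
  assumes f: "f \<in> Mon n"
  shows "int n = (\<Sum>P\<in>Prm n. \<Sum>k\<in>{1..n}. if P^k dvd f then int (degree P) else 0)"
proof -
  have "int n = int (\<Sum>P\<in>Prm n. \<Sum>k\<in>{1..n}. if P^k dvd f then degree P else 0)"
    using degree_factor[OF f] by simp
  also have "\<dots> = (\<Sum>P\<in>Prm n. \<Sum>k\<in>{1..n}. int (if P^k dvd f then degree P else 0))"
    by (simp only: of_nat_sum)
  also have "\<dots> = (\<Sum>P\<in>Prm n. \<Sum>k\<in>{1..n}. if P^k dvd f then int (degree P) else 0)"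
    by (intro sum.cong refl) simp
  finally show ?thesis .
qed

lemma mult_if0: "(c::int) * (if b then x else 0) = (if b then c * x else 0)" by simp

locale chi_mult =
  fixes \<chi> :: "bit poly \<Rightarrow> int"
  assumes chi_mult: "\<And>f g. \<chi> (f*g) = \<chi> f * \<chi> g" and chi_one: "\<chi> 1 = 1"
begin

lemma chi_power: "\<chi> (P^k) = \<chi> P ^ k"
  by (induction k) (simp_all add: chi_one chi_mult)

lemma sum_dvd:
  assumes P: "lead_coeff P = 1"
  shows "(\<Sum>f\<in>{f\<in>Mon n. P^k dvd f}. \<chi> f) = (if k * degree P \<le> n then \<chi> P ^ k * A \<chi> (n - k * degree P) else 0)"
proof (cases "k * degree P \<le> n")
  case True
  have P0: "P^k \<noteq> 0" using P by auto
  have inj: "inj_on (\<lambda>g. P^k*g) (Mon (n - k * degree P))" using P0 by (auto simp: inj_on_def)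
  show ?thesis unfolding dvd_set[OF P] using True
    by (simp add: sum.reindex[OF inj] chi_mult chi_power A_def sum_distrib_left)
next
  case False thus ?thesis unfolding dvd_set[OF P] by simp
qed

lemma rec1: "int n * A \<chi> n = (\<Sum>P\<in>Prm n. \<Sum>k\<in>{1..n}. if k * degree P \<le> n then int (degree P) * (\<chi> P ^ k * A \<chi> (n - k * degree P)) else 0)"
proof -
  have "int n * A \<chi> n = (\<Sum>f\<in>Mon n. \<chi> f * int n)" by (simp add: A_def sum_distrib_left mult.commute)
  also have "\<dots> = (\<Sum>f\<in>Mon n. \<chi> f * (\<Sum>P\<in>Prm n. \<Sum>k\<in>{1..n}. if P^k dvd f then int (degree P) else 0))"
  proof (rule sum.cong[OF refl])
    fix f assume "f \<in> Mon n"
    from degree_factor_int[OF this] show "\<chi> f * int n = \<chi> f * (\<Sum>P\<in>Prm n. \<Sum>k\<in>{1..n}. if P^k dvd f then int (degree P) else 0)"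
      by (rule arg_cong)
  qed
  also have "\<dots> = (\<Sum>f\<in>Mon n. \<Sum>P\<in>Prm n. \<Sum>k\<in>{1..n}. if P^k dvd f then \<chi> f * int (degree P) else 0)"
    by (simp add: sum_distrib_left mult_if0)
  also have "\<dots> = (\<Sum>P\<in>Prm n. \<Sum>k\<in>{1..n}. \<Sum>f\<in>Mon n. if P^k dvd f then \<chi> f * int (degree P) else 0)"
    by (subst sum.swap) (simp add: sum.swap[of _ "Mon n"])
  also have "\<dots> = (\<Sum>P\<in>Prm n. \<Sum>k\<in>{1..n}. int (degree P) * (\<Sum>f\<in>{f\<in>Mon n. P^k dvd f}. \<chi> f))"
    by (intro sum.cong refl) (auto simp: sum.inter_filter sum_distrib_left mult_if0 intro!: sum.cong)
  also have "\<dots> = (\<Sum>P\<in>Prm n. \<Sum>k\<in>{1..n}. if k * degree P \<le> n then int (degree P) * (\<chi> P ^ k * A \<chi> (n - k * degree P)) else 0)"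
    by (intro sum.cong refl) (simp add: sum_dvd Prm_def)
  finally show ?thesis .
qed

end



lemma Bd_eq:
  assumes m: "1 \<le> m" "m \<le> N"
  shows "(\<Sum>P\<in>Prm N. \<Sum>k\<in>{1..N}. if k * degree P = m then int (degree P) * \<chi> P ^ k else 0) = Bd \<chi> m"
proof -
  have "(\<Sum>P\<in>Prm N. \<Sum>k\<in>{1..N}. if k * degree P = m then int (degree P) * \<chi> P ^ k else 0)
      = (\<Sum>P\<in>Prm N. if degree P dvd m then int (degree P) * \<chi> P ^ (m div degree P) else 0)"
  proof (rule sum.cong[OF refl])
    fix P assume P: "P \<in> Prm N"
    hence dP: "degree P > 0" using irr_degree_pos by (auto simp: Prm_def)
    have "(\<Sum>k\<in>{1..N}. if k * degree P = m then int (degree P) * \<chi> P ^ k else 0)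
        = (\<Sum>k\<in>{1..N}. if k = m div degree P \<and> degree P dvd m then int (degree P) * \<chi> P ^ (m div degree P) else 0)"
      using dP by (intro sum.cong refl) auto
    also have "\<dots> = (if degree P dvd m then int (degree P) * \<chi> P ^ (m div degree P) else 0)"
    proof (cases "degree P dvd m")
      case True
      have "m div degree P \<in> {1..N}" using True m dP
        by (auto elim!: dvdE) (metis div_le_dividend le_trans nonzero_mult_div_cancel_left not_gr0)
      thus ?thesis using True by (simp add: sum.delta)
    qed simp
    finally show "(\<Sum>k\<in>{1..N}. if k * degree P = m then int (degree P) * \<chi> P ^ k else 0)
        = (if degree P dvd m then int (degree P) * \<chi> P ^ (m div degree P) else 0)" .
  qed
  also have "\<dots> = (\<Sum>P\<in>{P\<in>Prm N. degree P dvd m}. int (degree P) * \<chi> P ^ (m div degree P))"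
    by (simp add: sum.inter_filter)
  also have "\<dots> = (\<Sum>d\<in>{d. d dvd m}. \<Sum>P\<in>{P\<in>{P\<in>Prm N. degree P dvd m}. degree P = d}. int (degree P) * \<chi> P ^ (m div degree P))"
    using m by (intro sum.group[symmetric]) (auto simp: finite_divisors_nat)
  also have "\<dots> = Bd \<chi> m" unfolding Bd_def
  proof (rule sum.cong[OF refl])
    fix d assume d: "d \<in> {d. d dvd m}"
    hence "d \<le> N" using m by (auto dest!: dvd_imp_le)
    hence "{P\<in>{P\<in>Prm N. degree P dvd m}. degree P = d} = irred_F2 d"
      using d by (auto simp: Prm_def irred_F2_def)
    thus "(\<Sum>P\<in>{P\<in>{P\<in>Prm N. degree P dvd m}. degree P = d}. int (degree P) * \<chi> P ^ (m div degree P))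
        = (\<Sum>P\<in>irred_F2 d. int d * \<chi> P ^ (m div d))"
      by (auto simp: irred_F2_def intro!: sum.cong)
  qed
  finally show ?thesis .
qed

context chi_mult begin

lemma rec2: "int n * A \<chi> n = (\<Sum>m\<in>{1..n}. Bd \<chi> m * A \<chi> (n - m))"
proof -
  have "int n * A \<chi> n = (\<Sum>P\<in>Prm n. \<Sum>k\<in>{1..n}. \<Sum>m\<in>{1..n}. if k * degree P = m then int (degree P) * \<chi> P ^ k * A \<chi> (n - m) else 0)"
    unfolding rec1
  proof (intro sum.cong refl)
    fix P k assume P: "P \<in> Prm n" and k: "k \<in> {1..n}"
    hence dP: "degree P > 0" using irr_degree_pos by (auto simp: Prm_def)
    have "k * degree P \<ge> 1" using dP k by auto
    thus "(if k * degree P \<le> n then int (degree P) * (\<chi> P ^ k * A \<chi> (n - k * degree P)) else 0)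
       = (\<Sum>m\<in>{1..n}. if k * degree P = m then int (degree P) * \<chi> P ^ k * A \<chi> (n - m) else 0)"
      by (simp add: sum.delta)
  qed
  also have "\<dots> = (\<Sum>m\<in>{1..n}. \<Sum>P\<in>Prm n. \<Sum>k\<in>{1..n}. if k * degree P = m then int (degree P) * \<chi> P ^ k * A \<chi> (n - m) else 0)"
  proof -
    have "(\<Sum>P\<in>Prm n. \<Sum>k\<in>{1..n}. \<Sum>m\<in>{1..n}. if k * degree P = m then int (degree P) * \<chi> P ^ k * A \<chi> (n - m) else 0)
       = (\<Sum>P\<in>Prm n. \<Sum>m\<in>{1..n}. \<Sum>k\<in>{1..n}. if k * degree P = m then int (degree P) * \<chi> P ^ k * A \<chi> (n - m) else 0)"
      by (rule sum.cong[OF refl], rule sum.swap)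
    also have "\<dots> = (\<Sum>m\<in>{1..n}. \<Sum>P\<in>Prm n. \<Sum>k\<in>{1..n}. if k * degree P = m then int (degree P) * \<chi> P ^ k * A \<chi> (n - m) else 0)"
      by (rule sum.swap)
    finally show ?thesis .
  qed
  also have "\<dots> = (\<Sum>m\<in>{1..n}. (\<Sum>P\<in>Prm n. \<Sum>k\<in>{1..n}. if k * degree P = m then int (degree P) * \<chi> P ^ k else 0) * A \<chi> (n - m))"
    by (intro sum.cong refl) (auto simp: sum_distrib_right intro!: sum.cong)
  also have "\<dots> = (\<Sum>m\<in>{1..n}. Bd \<chi> m * A \<chi> (n - m))"
  proof (rule sum.cong[OF refl])
    fix m assume m: "m \<in> {1..n}"
    show "(\<Sum>P\<in>Prm n. \<Sum>k\<in>{1..n}. if k * degree P = m then int (degree P) * \<chi> P ^ k else 0) * A \<chi> (n - m) = Bd \<chi> m * A \<chi> (n - m)"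
      using Bd_eq[of m n \<chi>] m by simp
  qed
  finally show ?thesis .
qed

end



definition Ic :: "nat \<Rightarrow> int" where "Ic d = int (card (irred_F2 d))"
definition Tc :: "nat \<Rightarrow> int" where "Tc d = int (card {f\<in>irred_F2 d. coeff f (d - 1) = 1})"

interpretation one: chi_mult "\<lambda>_. 1" by standard auto

lemma A_one: "A (\<lambda>_. 1) n = 2^n"
  by (simp add: A_def card_Mon)

lemma Bd_one: "m \<ge> 1 \<Longrightarrow> Bd (\<lambda>_. 1) m = 2^m"
proof (induction m rule: less_induct)
  case (less n)
  have "int n * 2^n = (\<Sum>m\<in>{1..n}. Bd (\<lambda>_. 1) m * 2^(n - m))"
    using one.rec2[of n] by (simp add: A_one)
  also have "\<dots> = (\<Sum>m\<in>{1..<n}. Bd (\<lambda>_. 1) m * 2^(n - m)) + Bd (\<lambda>_. 1) n"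
  proof -
    have "{1..n} = insert n {1..<n}" using less.prems by auto
    thus ?thesis by (simp add: add.commute)
  qed
  also have "(\<Sum>m\<in>{1..<n}. Bd (\<lambda>_. 1) m * 2^(n - m)) = (\<Sum>m\<in>{1..<n}. 2^n)"
  proof (intro sum.cong refl)
    fix m assume "m \<in> {1..<n}"
    hence "Bd (\<lambda>_. 1) m = 2^m" "m \<le> n" using less.IH by auto
    thus "Bd (\<lambda>_. 1) m * 2^(n - m) = 2^n" by (simp add: power_add[symmetric])
  qed
  also have "\<dots> = int (n - 1) * 2^n" by simp
  finally have "int n * 2^n = int (n - 1) * 2^n + Bd (\<lambda>_. 1) n" .
  moreover have "int n = int (n - 1) + 1" using less.prems by simp
  ultimately have "int (n - 1) * 2^n + 2^n = int (n - 1) * 2^n + Bd (\<lambda>_. 1) n"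
    by (metis distrib_right mult_1)
  thus ?case by linarith
qed

lemma G: "m \<ge> 1 \<Longrightarrow> (\<Sum>d\<in>{d. d dvd m}. int d * Ic d) = 2^m"
proof -
  assume m: "m \<ge> 1"
  have "Bd (\<lambda>_. 1) m = (\<Sum>d\<in>{d. d dvd m}. int d * Ic d)"
    unfolding Bd_def Ic_def by (intro sum.cong refl) simp
  thus ?thesis using Bd_one[OF m] by simp
qed



definition chi1 :: "bit poly \<Rightarrow> int" where
  "chi1 p = (if coeff p 0 = 0 then 0 else if coeff p 1 = 0 then 1 else -1)"

lemma bit_cases2: "(x::bit) = 0 \<or> x = 1" by auto

lemma coeff_mult_1: "coeff (p*q) 1 = coeff p 0 * coeff q 1 + coeff p 1 * coeff q 0"
  by (simp add: coeff_mult)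

lemma chi1_mult: "chi1 (p*q) = chi1 p * chi1 q"
proof -
  have "coeff (p*q) 0 = coeff p 0 * coeff q 0" by (simp add: coeff_mult_0)
  thus ?thesis unfolding chi1_def coeff_mult_1
    using bit_cases2[of "coeff p 0"] bit_cases2[of "coeff q 0"] bit_cases2[of "coeff p 1"] bit_cases2[of "coeff q 1"]
    by auto
qed

definition chiT :: "bit poly \<Rightarrow> int" where "chiT p = chi1 (reflect_poly p)"

interpretation T: chi_mult chiT
  by standard (simp_all add: chiT_def reflect_poly_mult chi1_mult, simp add: chi1_def)

lemma chiT_Mon:
  assumes "f \<in> Mon n" "n \<ge> 1"
  shows "chiT f = (if coeff f (n - 1) = 1 then -1 else 1)"
  using assms by (auto simp: chiT_def chi1_def coeff_reflect_poly Mon_def)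

lemma bit_add_self: "(x::bit) + x = 0" using bit_cases2[of x] by auto

lemma sum_invol_zero:
  fixes g :: "'a \<Rightarrow> int"
  assumes "finite X" "\<And>x. x \<in> X \<Longrightarrow> s x \<in> X" "\<And>x. x \<in> X \<Longrightarrow> s (s x) = x"
    "\<And>x. x \<in> X \<Longrightarrow> g (s x) = - g x"
  shows "sum g X = 0"
proof -
  have b: "bij_betw s X X"
    by (rule bij_betwI[of s X X s]) (use assms in auto)
  have "sum g X = sum (g \<circ> s) X" using sum.reindex_bij_betw[OF b, of g] by simp
  also have "\<dots> = - sum g X" using assms(4) by (simp add: sum_negf)
  finally show ?thesis by simp
qed

lemma A_T: "A chiT n = (if n = 0 then 1 else 0)"
proof (cases "n = 0")
  case True thus ?thesis by (simp add: A_def Mon_0 chiT_def chi1_def)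
next
  case False
  define s where "s f = f + monom 1 (n - 1)" for f :: "bit poly"
  have sM: "s f \<in> Mon n" if "f \<in> Mon n" for f
  proof -
    have "degree (monom (1::bit) (n - 1)) < degree f" using that False by (simp add: Mon_def degree_monom_eq)
    hence "degree (s f) = n" "lead_coeff (s f) = 1" using that False
      by (auto simp: s_def degree_add_eq_left Mon_def)
    thus ?thesis by (simp add: Mon_def)
  qed
  have mm: "monom (1::bit) k + monom 1 k = 0" for k
    by (simp only: add_monom bit_add_self monom_eq_0)
  have ss: "s (s f) = f" for f
    unfolding s_def by (simp only: add.assoc mm add_0_right)
  have cs: "coeff (s f) (n - 1) = coeff f (n - 1) + 1" for f
    by (simp add: s_def)
  have "sum chiT (Mon n) = 0"
  proof (rule sum_invol_zero[of _ s])
    fix f assume f: "f \<in> Mon n"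
    show "chiT (s f) = - chiT f"
      using chiT_Mon[OF sM[OF f]] chiT_Mon[OF f] False cs[of f] bit_cases2[of "coeff f (n - 1)"] by auto
  qed (use sM ss in auto)
  thus ?thesis using False by (simp add: A_def)
qed

lemma Bd_T: "m \<ge> 1 \<Longrightarrow> Bd chiT m = 0"
proof -
  assume m: "m \<ge> 1"
  have "0 = (\<Sum>k\<in>{1..m}. Bd chiT k * A chiT (m - k))" using T.rec2[of m] m by (simp add: A_T)
  also have "\<dots> = (\<Sum>k\<in>{1..m}. if k = m then Bd chiT k else 0)"
    by (intro sum.cong refl) (auto simp: A_T)
  also have "\<dots> = Bd chiT m" using m by simp
  finally show ?thesis by simp
qed

lemma sum_pm1: "finite X \<Longrightarrow> (\<Sum>x\<in>X. if Q x then -1 else 1::int) = int (card X) - 2 * int (card {x\<in>X. Q x})"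
proof -
  assume X: "finite X"
  have "(\<Sum>x\<in>X. if Q x then -1 else 1::int) = (\<Sum>x\<in>X. 1 - (if Q x then 2 else 0))"
    by (intro sum.cong refl) auto
  also have "\<dots> = int (card X) - 2 * int (card {x\<in>X. Q x})"
    using X by (simp add: sum_subtractf sum.inter_filter[symmetric])
  finally show ?thesis .
qed

lemma H: "m \<ge> 1 \<Longrightarrow> 2 * (\<Sum>d\<in>{d. d dvd m \<and> odd (m div d)}. int d * Tc d) = 2^m"
proof -
  assume m: "m \<ge> 1"
  have fin: "finite {d. d dvd m}" using m by (simp add: finite_divisors_nat)
  have "0 = Bd chiT m" using Bd_T[OF m] by simp
  also have "\<dots> = (\<Sum>d\<in>{d. d dvd m}. int d * (Ic d - (if odd (m div d) then 2 * Tc d else 0)))"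
    unfolding Bd_def
  proof (intro sum.cong refl)
    fix d assume d: "d \<in> {d. d dvd m}"
    hence d1: "d \<ge> 1" using m by (cases d) auto
    have "(\<Sum>P\<in>irred_F2 d. int d * chiT P ^ (m div d)) = int d * (\<Sum>P\<in>irred_F2 d. if odd (m div d) \<and> coeff P (d - 1) = 1 then -1 else 1)"
      unfolding sum_distrib_left
    proof (intro sum.cong refl)
      fix P assume "P \<in> irred_F2 d"
      hence "P \<in> Mon d" by (auto simp: irred_F2_def Mon_def)
      from chiT_Mon[OF this d1] show "int d * chiT P ^ (m div d) = int d * (if odd (m div d) \<and> coeff P (d - 1) = 1 then -1 else 1)"
        by auto
    qed
    also have "\<dots> = int d * (Ic d - (if odd (m div d) then 2 * Tc d else 0))"
      by (subst sum_pm1) (auto simp: Ic_def Tc_def)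
    finally show "(\<Sum>P\<in>irred_F2 d. int d * chiT P ^ (m div d)) = int d * (Ic d - (if odd (m div d) then 2 * Tc d else 0))" .
  qed
  also have "\<dots> = (\<Sum>d\<in>{d. d dvd m}. int d * Ic d - 2 * (if odd (m div d) then int d * Tc d else 0))"
    by (intro sum.cong refl) (simp add: right_diff_distrib)
  also have "\<dots> = (\<Sum>d\<in>{d. d dvd m}. int d * Ic d) - 2 * (\<Sum>d\<in>{d. d dvd m}. if odd (m div d) then int d * Tc d else 0)"
    by (simp only: sum_subtractf sum_distrib_left)
  also have "(\<Sum>d\<in>{d. d dvd m}. if odd (m div d) then int d * Tc d else 0) = (\<Sum>d\<in>{d. d dvd m \<and> odd (m div d)}. int d * Tc d)"
  proof -
    have e: "{d. d dvd m \<and> odd (m div d)} = {d\<in>{d. d dvd m}. odd (m div d)}" by simp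
    show ?thesis unfolding e sum.inter_filter[OF fin] ..
  qed
  finally show ?thesis using G[OF m] by simp
qed



lemma coeff0_irred:
  assumes P: "P \<in> irred_F2 n" and n: "n \<ge> 2"
  shows "coeff P 0 = 1"
proof (rule ccontr)
  assume "coeff P 0 \<noteq> 1"
  hence "coeff P 0 = 0" by simp
  hence "poly P (- 0) = 0" by (simp add: poly_0_coeff_0)
  hence "[:0, 1:] dvd P" by (simp only: dvd_iff_poly_eq_0)
  then obtain q where q: "P = [:0, 1:] * q" by (elim dvdE)
  have irr: "irreducible P" using P by (simp add: irred_F2_def)
  have "\<not> is_unit [:0::bit, 1:]" by (simp add: is_unit_iff_degree)
  hence "is_unit q" using irreducibleD[OF irr q] by blast
  hence "degree q = 0" using is_unit_iff_degree[of q] by (cases "q = 0") auto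
  moreover have "q \<noteq> 0" using q irr by auto
  ultimately have "degree P = 1" using q by (simp add: degree_mult_eq)
  thus False using P n by (simp add: irred_F2_def)
qed

lemma irreducible_reflect:
  assumes c: "coeff p 0 \<noteq> 0" and irr: "irreducible (p::bit poly)"
  shows "irreducible (reflect_poly p)"
proof (rule irreducibleI)
  have p0: "p \<noteq> 0" using irr by auto
  show "reflect_poly p \<noteq> 0" using p0 by simp
  have "degree p > 0" using irr by (rule irr_degree_pos)
  hence "degree (reflect_poly p) > 0" using c by simp
  thus "\<not> reflect_poly p dvd 1" using is_unit_iff_degree[of "reflect_poly p"] p0 by auto
  fix a b assume ab: "reflect_poly p = a * b"
  have "coeff a 0 * coeff b 0 = lead_coeff p"
    using arg_cong[OF ab, of "\<lambda>x. coeff x 0"] by (simp add: coeff_mult_0)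
  hence "coeff a 0 * coeff b 0 \<noteq> 0" using p0 leading_coeff_neq_0 by metis
  hence ca: "coeff a 0 \<noteq> 0" and cb: "coeff b 0 \<noteq> 0" by (metis mult_zero_left, metis mult_zero_right)
  have "p = reflect_poly a * reflect_poly b"
    using reflect_poly_reflect_poly[OF c] ab by (simp add: reflect_poly_mult)
  hence "is_unit (reflect_poly a) \<or> is_unit (reflect_poly b)" using irreducibleD[OF irr] by blast
  moreover have "a \<noteq> 0" "b \<noteq> 0" using ca cb by auto
  ultimately show "is_unit a \<or> is_unit b"
    using ca cb by (auto simp: is_unit_iff_degree)
qed

lemma reflect_S:
  assumes P: "P \<in> S i j n" and n: "n \<ge> 2"
  shows "reflect_poly P \<in> S j i n"
proof -
  have Pi: "P \<in> irred_F2 n" and ci: "coeff P (n - 1) = i" and cj: "coeff P 1 = j"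
    using P by (auto simp: S_def)
  have c0: "coeff P 0 = 1" by (rule coeff0_irred[OF Pi n])
  have dP: "degree P = n" using Pi by (simp add: irred_F2_def)
  have d: "degree (reflect_poly P) = n" using c0 dP by simp
  have l: "lead_coeff (reflect_poly P) = 1" using d dP c0 by (simp add: coeff_reflect_poly)
  have irr: "irreducible (reflect_poly P)" using irreducible_reflect[of P] c0 Pi by (simp add: irred_F2_def)
  have "coeff (reflect_poly P) (n - 1) = j" using dP n cj by (simp add: coeff_reflect_poly)
  moreover have "coeff (reflect_poly P) 1 = i" using dP n ci by (simp add: coeff_reflect_poly)
  ultimately show ?thesis using d l irr by (simp add: S_def irred_F2_def)
qed

lemma finite_S: "finite (S i j n)"
  by (rule finite_subset[of _ "irred_F2 n"]) (auto simp: S_def)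

lemma card_S_le:
  assumes n: "n \<ge> 2"
  shows "card (S i j n) \<le> card (S j i n)"
proof (rule card_inj_on_le[of reflect_poly])
  show "inj_on reflect_poly (S i j n)"
  proof (rule inj_onI)
    fix x y assume x: "x \<in> S i j n" and y: "y \<in> S i j n" and e: "reflect_poly x = reflect_poly y"
    have "coeff x 0 = 1" "coeff y 0 = 1" using x y coeff0_irred n by (auto simp: S_def)
    thus "x = y" using e by (metis one_neq_zero reflect_poly_reflect_poly)
  qed
  show "reflect_poly ` S i j n \<subseteq> S j i n" using reflect_S n by auto
qed (rule finite_S)

lemma card_S_sym: "n \<ge> 2 \<Longrightarrow> card (S i j n) = card (S j i n)"
  using card_S_le[of n i j] card_S_le[of n j i] by simp

lemma card_split: "finite X \<Longrightarrow> card X = card {x\<in>X. Q x} + card {x\<in>X. \<not> Q x}"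
  by (subst card_Un_disjoint[symmetric]) (auto intro: arg_cong[where f = card])



definition E :: "nat \<Rightarrow> nat set" where "E m = {d. d dvd m \<and> odd (m div d)}"

lemma finite_E: "m \<ge> 1 \<Longrightarrow> finite (E m)"
  by (rule finite_subset[of _ "{d. d dvd m}"]) (auto simp: E_def finite_divisors_nat)

lemma E_double: "m \<ge> 1 \<Longrightarrow> E (2*m) = (\<lambda>e. 2*e) ` E m"
proof (intro set_eqI iffI)
  fix d assume m: "m \<ge> 1" and d: "d \<in> E (2*m)"
  hence dd: "d dvd 2*m" and ko: "odd (2*m div d)" by (auto simp: E_def)
  from dd obtain k where k: "2*m = d*k" by (elim dvdE)
  have d0: "d > 0" using k m by (cases d) auto
  have kd: "2*m div d = k" using k d0 by simp
  hence "odd k" using ko by simp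
  hence "even d" using k by (metis even_mult_iff dvd_triv_left)
  then obtain e where e: "d = 2*e" by (elim evenE)
  have "m = e*k" using k e by simp
  hence "e dvd m" "m div e = k" using d0 e by auto
  thus "d \<in> (\<lambda>e. 2*e) ` E m" using e \<open>odd k\<close> by (auto simp: E_def)
next
  fix d assume m: "m \<ge> 1" and d: "d \<in> (\<lambda>e. 2*e) ` E m"
  then obtain e where e: "d = 2*e" "e dvd m" "odd (m div e)" by (auto simp: E_def)
  have "2*m div (2*e) = m div e" by simp
  thus "d \<in> E (2*m)" using e by (auto simp: E_def)
qed

lemma divisors_double: "m \<ge> 1 \<Longrightarrow> {d. d dvd 2*m} = E (2*m) \<union> {d. d dvd m}"
proof (intro set_eqI iffI)
  fix d assume m: "m \<ge> 1" and "d \<in> {d. d dvd 2*m}"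
  then obtain k where k: "2*m = d*k" by (auto elim!: dvdE)
  have d0: "d > 0" using k m by (cases d) auto
  have kd: "2*m div d = k" using k d0 by simp
  show "d \<in> E (2*m) \<union> {d. d dvd m}"
  proof (cases "odd k")
    case True thus ?thesis using kd k by (auto simp: E_def)
  next
    case False
    hence "even k" by simp
    then obtain k' where "k = 2*k'" by (elim evenE)
    hence "m = d*k'" using k by simp
    thus ?thesis by auto
  qed
next
  fix d assume m: "m \<ge> 1" and "d \<in> E (2*m) \<union> {d. d dvd m}"
  thus "d \<in> {d. d dvd 2*m}" by (auto simp: E_def)
qed

lemma E_disj: "m \<ge> 1 \<Longrightarrow> E (2*m) \<inter> {d. d dvd m} = {}"
proof -
  assume m: "m \<ge> 1"
  have False if "d dvd m" and o: "odd (2*m div d)" for d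
  proof -
    from that obtain k where k: "m = d*k" by (elim dvdE)
    have d0: "d > 0" using k m by (cases d) auto
    have "2*m div d = 2*k" using k d0 by simp
    thus False using o by simp
  qed
  thus ?thesis by (auto simp: E_def)
qed

lemma H': "m \<ge> 1 \<Longrightarrow> 2 * (\<Sum>d\<in>E m. int d * Tc d) = 2^m"
  using H by (simp add: E_def)

lemma uniq:
  fixes R :: "nat \<Rightarrow> int"
  assumes h: "\<And>m. m \<ge> 1 \<Longrightarrow> (\<Sum>e\<in>E m. int e * R e) = 0"
  shows "m \<ge> 1 \<Longrightarrow> R m = 0"
proof (induction m rule: less_induct)
  case (less m)
  have mE: "m \<in> E m" using less.prems by (simp add: E_def)
  have fin: "finite (E m)" using finite_E less.prems by simp
  have "(\<Sum>e\<in>E m. int e * R e) = int m * R m + (\<Sum>e\<in>E m - {m}. int e * R e)"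
    using fin mE by (simp add: sum.remove)
  also have "(\<Sum>e\<in>E m - {m}. int e * R e) = 0"
  proof (rule sum.neutral, rule ballI)
    fix e assume e: "e \<in> E m - {m}"
    hence "e dvd m" "e \<noteq> m" by (auto simp: E_def)
    hence "e < m" "e \<ge> 1" using less.prems by (auto dest: dvd_imp_le intro: Nat.gr0I)
    thus "int e * R e = 0" using less.IH by simp
  qed
  finally show ?case using h[OF less.prems] less.prems by simp
qed

lemma T_rel: "m \<ge> 1 \<Longrightarrow> 2 * Tc (2*m) - Ic (2*m) = Tc m"
proof -
  have key: "(\<Sum>e\<in>E m. int e * (2 * Tc (2*e) - Ic (2*e) - Tc e)) = 0" if m: "m \<ge> 1" for m
  proof -
    have inj: "inj_on (\<lambda>e. 2*e) (E m)" by (auto simp: inj_on_def)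
    have fin: "finite (E m)" using finite_E m by simp
    have m2: "2*m \<ge> 1" using m by simp
    have h1: "2 * (\<Sum>e\<in>E m. int (2*e) * Tc (2*e)) = 2^(2*m)"
      using H'[OF m2] unfolding E_double[OF m] sum.reindex[OF inj] by (simp add: o_def)
    have "(\<Sum>d\<in>{d. d dvd 2*m}. int d * Ic d) = (\<Sum>d\<in>E (2*m). int d * Ic d) + (\<Sum>d\<in>{d. d dvd m}. int d * Ic d)"
      unfolding divisors_double[OF m]
      by (rule sum.union_disjoint) (use finite_E[OF m2] E_disj[OF m] m in \<open>auto simp: finite_divisors_nat\<close>)
    moreover have "(\<Sum>d\<in>E (2*m). int d * Ic d) = (\<Sum>e\<in>E m. int (2*e) * Ic (2*e))"
      unfolding E_double[OF m] sum.reindex[OF inj] by (simp add: o_def)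
    ultimately have h2: "2^(2*m) = (\<Sum>e\<in>E m. int (2*e) * Ic (2*e)) + 2^m"
      using G[OF m2] G[OF m] by simp
    have h3: "2 * (\<Sum>e\<in>E m. int e * Tc e) = 2^m" by (rule H'[OF m])
    have "2 * (\<Sum>e\<in>E m. int e * (2 * Tc (2*e) - Ic (2*e) - Tc e))
        = (\<Sum>e\<in>E m. 2 * (int e * (2 * Tc (2*e) - Ic (2*e) - Tc e)))"
      by (simp only: sum_distrib_left)
    also have "\<dots> = (\<Sum>e\<in>E m. 2 * (int (2*e) * Tc (2*e)) - int (2*e) * Ic (2*e) - 2 * (int e * Tc e))"
      by (intro sum.cong refl) (simp add: algebra_simps)
    also have "\<dots> = 2 * (\<Sum>e\<in>E m. int (2*e) * Tc (2*e)) - (\<Sum>e\<in>E m. int (2*e) * Ic (2*e)) - 2 * (\<Sum>e\<in>E m. int e * Tc e)"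
      by (simp only: sum_subtractf sum_distrib_left)
    also have "\<dots> = 0" using h1 h2 h3 by linarith
    finally show ?thesis by simp
  qed
  assume "m \<ge> 1"
  from uniq[of "\<lambda>e. 2 * Tc (2*e) - Ic (2*e) - Tc e", OF key this] show ?thesis by simp
qed

lemma T_formula: "m \<ge> 1 \<Longrightarrow> 2 * int m * Tc m = (\<Sum>e\<in>{e. e dvd m \<and> odd e}. mobius e * 2 ^ (m div e))"
proof -
  assume m: "m \<ge> 1"
  have "\<And>k. k > 0 \<Longrightarrow> (\<Sum>d\<in>{d. d dvd k \<and> odd (k div d)}. int d * Tc d) = 2^(k - 1)"
  proof -
    fix k :: nat assume k: "k > 0"
    have "2 * (\<Sum>d\<in>{d. d dvd k \<and> odd (k div d)}. int d * Tc d) = 2 * 2^(k-1)"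
      using H[of k] k by (simp add: power_Suc[symmetric])
    thus "(\<Sum>d\<in>{d. d dvd k \<and> odd (k div d)}. int d * Tc d) = 2^(k - 1)" by simp
  qed
  from odd_inversion[where f = "\<lambda>d. int d * Tc d" and g = "\<lambda>k. 2^(k-1)", OF this]
  have "int m * Tc m = (\<Sum>e\<in>{e. e dvd m \<and> odd e}. mobius e * 2 ^ (m div e - 1))" using m by simp
  hence "2 * int m * Tc m = 2 * (\<Sum>e\<in>{e. e dvd m \<and> odd e}. mobius e * 2 ^ (m div e - 1))"
    by (simp only: mult.assoc)
  also have "\<dots> = (\<Sum>e\<in>{e. e dvd m \<and> odd e}. 2 * (mobius e * 2 ^ (m div e - 1)))"
    by (simp only: sum_distrib_left)
  also have "\<dots> = (\<Sum>e\<in>{e. e dvd m \<and> odd e}. mobius e * (2 * 2 ^ (m div e - 1)))"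
    by (intro sum.cong refl) (simp only: mult.left_commute)
  also have "\<dots> = (\<Sum>e\<in>{e. e dvd m \<and> odd e}. mobius e * 2 ^ (m div e))"
  proof (intro sum.cong refl)
    fix e assume "e \<in> {e. e dvd m \<and> odd e}"
    hence "m div e \<ge> 1" using m by (auto elim!: dvdE)
    hence "2 * (2::int) ^ (m div e - 1) = 2 ^ (m div e)" by (metis Suc_diff_le diff_Suc_1 power_Suc)
    thus "mobius e * (2 * 2 ^ (m div e - 1)) = mobius e * 2 ^ (m div e)" by simp
  qed
  finally show ?thesis .
qed



theorem theorem2:
  fixes n :: nat
  assumes "n \<ge> 2" and "even n"
  shows "int (card (S 1 1 n)) - int (card (S 0 0 n))
           = int (card {f \<in> irred_F2 (n div 2). coeff f (n div 2 - 1) = 1})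
         \<and> real (card (S 1 1 n)) - real (card (S 0 0 n))
           = (1 / real n) * (\<Sum>d \<in> {d. d dvd n div 2 \<and> odd d}. real_of_int (mobius d) * 2 ^ (n div (2 * d)))"
proof -
  obtain m where nm: "n = 2*m" using assms(2) by (elim evenE)
  have m: "m \<ge> 1" using assms(1) nm by simp
  have md: "n div 2 = m" using nm by simp
  define X1 where "X1 = {f \<in> irred_F2 n. coeff f (n - 1) = 1}"
  define X0 where "X0 = {f \<in> irred_F2 n. coeff f (n - 1) = 0}"
  have fX1: "finite X1" and fX0: "finite X0" by (auto simp: X1_def X0_def)
  have e11: "{x\<in>X1. coeff x 1 = 1} = S 1 1 n" by (auto simp: X1_def S_def)
  have e10: "{x\<in>X1. \<not> coeff x 1 = 1} = S 1 0 n" by (auto simp: X1_def S_def)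
  have e01: "{x\<in>X0. coeff x 1 = 1} = S 0 1 n" by (auto simp: X0_def S_def)
  have e00: "{x\<in>X0. \<not> coeff x 1 = 1} = S 0 0 n" by (auto simp: X0_def S_def)
  have c1: "card X1 = card (S 1 1 n) + card (S 1 0 n)"
    using card_split[OF fX1, of "\<lambda>x. coeff x 1 = 1"] e11 e10 by simp
  have c0: "card X0 = card (S 0 1 n) + card (S 0 0 n)"
    using card_split[OF fX0, of "\<lambda>x. coeff x 1 = 1"] e01 e00 by simp
  have eX1: "{x\<in>irred_F2 n. coeff x (n - 1) = 1} = X1" by (simp add: X1_def)
  have eX0: "{x\<in>irred_F2 n. \<not> coeff x (n - 1) = 1} = X0" by (auto simp: X0_def)
  have ci: "card (irred_F2 n) = card X1 + card X0"
    using card_split[OF finite_irred, of n "\<lambda>x. coeff x (n - 1) = 1"] eX1 eX0 by simp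
  have sym: "card (S 1 0 n) = card (S 0 1 n)" using card_S_sym[OF assms(1)] by simp
  have TI: "Tc n = int (card X1)" "Ic n = int (card (irred_F2 n))" by (simp_all add: Tc_def Ic_def X1_def)
  have rel: "2 * Tc n - Ic n = Tc m" using T_rel[OF m] nm by simp
  have part1: "int (card (S 1 1 n)) - int (card (S 0 0 n)) = Tc m"
    using rel TI c1 c0 ci sym by simp
  have part1': "int (card (S 1 1 n)) - int (card (S 0 0 n))
           = int (card {f \<in> irred_F2 (n div 2). coeff f (n div 2 - 1) = 1})"
    using part1 md by (simp add: Tc_def)
  have form: "2 * int m * Tc m = (\<Sum>e\<in>{e. e dvd m \<and> odd e}. mobius e * 2 ^ (m div e))"
    by (rule T_formula[OF m])
  have "real (card (S 1 1 n)) - real (card (S 0 0 n)) = real_of_int (Tc m)"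
    using arg_cong[OF part1, of real_of_int] by simp
  also have "\<dots> = (1 / real n) * real_of_int (2 * int m * Tc m)"
    using nm m by simp
  also have "\<dots> = (1 / real n) * (\<Sum>d \<in> {d. d dvd n div 2 \<and> odd d}. real_of_int (mobius d) * 2 ^ (n div (2 * d)))"
  proof -
    have "real_of_int (2 * int m * Tc m) = (\<Sum>e\<in>{e. e dvd m \<and> odd e}. real_of_int (mobius e) * 2 ^ (m div e))"
      unfolding form by (simp add: of_int_sum)
    also have "\<dots> = (\<Sum>d \<in> {d. d dvd n div 2 \<and> odd d}. real_of_int (mobius d) * 2 ^ (n div (2 * d)))"
      unfolding md by (intro sum.cong refl) (simp add: nm div_mult2_eq)
    finally show ?thesis by simp
  qed
  finally show ?thesis using part1' by simp
qed


end
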